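(* Let $A=\{f_1,\cdots,f_s\}\subset H^2_{\mathbb C^n}$ and let $F:=[f_1,\cdots,f_s]$ be the $n\times s$ matrix function with these columns. Then $E^*_A=H^2_{\mathbb C^n}\ominus\ker H_{\bar zF^*}$.
   Context: $S$ is the shift $Sf=zf$ on $H^2_{\mathbb C^n}$ and $S^*$ its adjoint; $E^*_A$ is the closed linear span of $\{S^{*k}f_i:k\ge0,\ 1\le i\le s\}$. $F^*(\zeta)=F(\zeta)^*$, so $\bar zF^*$ is an $s\times n$ matrix function with entries in $L^2$. For $\Phi\in L^2_{M_{s\times n}}$, $\ker H_\Phi=\{h\in H^2_{\mathbb C^n}:\Phi h\in H^1_{\mathbb C^s}\}$ is the kernel of the block Hankel operator $H_\Phi h=J(I-P)(\Phi h)$. *)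

theory Defs
  imports "HOL-Analysis.Analysis"
begin

text \<open>Functions on the unit circle are parametrised by t in [0, 2 pi] (zeta = exp(i t)).
  Vector-valued functions take values in complex^'n.\<close>

definition circ :: "real set" where "circ = {0..2*pi}"

definition fcoeff :: "(real \<Rightarrow> complex) \<Rightarrow> int \<Rightarrow> complex" where
  "fcoeff g k = (1 / (2*pi)) * (LINT t:circ|lborel. g t * exp (- \<i> * of_int k * of_real t))"

definition vfcoeff :: "(real \<Rightarrow> complex^'m) \<Rightarrow> int \<Rightarrow> complex^'m" where
  "vfcoeff h k = (\<chi> j. fcoeff (\<lambda>t. h t $ j) k)"

definition Lp_circ :: "nat \<Rightarrow> (real \<Rightarrow> complex^'m) \<Rightarrow> bool" where
  "Lp_circ p h \<longleftrightarrow> set_borel_measurable lborel circ h \<and>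
     set_integrable lborel circ (\<lambda>t. norm (h t) ^ p)"

definition Hp :: "nat \<Rightarrow> (real \<Rightarrow> complex^'m) set" where
  "Hp p = {h. Lp_circ p h \<and> (\<forall>k::int. k < 0 \<longrightarrow> vfcoeff h k = 0)}"

definition ip2 :: "(real \<Rightarrow> complex^'m) \<Rightarrow> (real \<Rightarrow> complex^'m) \<Rightarrow> complex" where
  "ip2 g h = (1 / (2*pi)) * (LINT t:circ|lborel. (\<Sum>j\<in>UNIV. g t $ j * cnj (h t $ j)))"

definition dist2 :: "(real \<Rightarrow> complex^'m) \<Rightarrow> (real \<Rightarrow> complex^'m) \<Rightarrow> real" where
  "dist2 g h = sqrt ((1 / (2*pi)) * (LINT t:circ|lborel. norm (g t - h t) ^ 2))"

text \<open>Adjoint of the shift: (S^* f)(z) = conj z (f(z) - f(0)).\<close>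
definition Sstar :: "(real \<Rightarrow> complex^'m) \<Rightarrow> (real \<Rightarrow> complex^'m)" where
  "Sstar f = (\<lambda>t. exp (- \<i> * of_real t) *s (f t - vfcoeff f 0))"

definition Estar :: "('s::finite \<Rightarrow> real \<Rightarrow> complex^'n) \<Rightarrow> (real \<Rightarrow> complex^'n) set" where
  "Estar f = {g \<in> Hp 2. \<forall>\<epsilon>>0. \<exists>(N::nat) (c::'s \<Rightarrow> nat \<Rightarrow> complex).
      dist2 g (\<lambda>t. \<Sum>i\<in>UNIV. \<Sum>k<N. c i k *s (Sstar ^^ k) (f i) t) < \<epsilon>}"

definition Fmat :: "('s::finite \<Rightarrow> real \<Rightarrow> complex^'n) \<Rightarrow> real \<Rightarrow> complex^'s^'n" where
  "Fmat f t = (\<chi> j i. f i t $ j)"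

definition zbarFstar :: "('s::finite \<Rightarrow> real \<Rightarrow> complex^'n) \<Rightarrow> real \<Rightarrow> complex^'n^'s" where
  "zbarFstar f t = (\<chi> i j. exp (- \<i> * of_real t) * cnj (Fmat f t $ j $ i))"

text \<open>Kernel of the block Hankel operator H_Phi: {h in H^2 : Phi h in H^1}.\<close>
definition kerHankel :: "(real \<Rightarrow> complex^'n^'s) \<Rightarrow> (real \<Rightarrow> complex^'n) set" where
  "kerHankel Phi = {h \<in> Hp 2. (\<lambda>t. Phi t *v h t) \<in> Hp 1}"

definition H2_ominus :: "(real \<Rightarrow> complex^'n) set \<Rightarrow> (real \<Rightarrow> complex^'n) set" where
  "H2_ominus K = {g \<in> Hp 2. \<forall>h\<in>K. ip2 g h = 0}"

end

theory Submission
  imports Defs "HOL-Analysis.Kronecker_Approximation_Theorem"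
begin


definition CM :: "real measure" where "CM = restrict_space lborel circ"

lemma circ_sets[simp]: "circ \<in> sets lborel" "circ \<in> sets borel" by (simp_all add: circ_def)

lemma LINT_CM: fixes g :: "real \<Rightarrow> 'b::{banach, second_countable_topology}" shows "(LINT t:circ|lborel. g t) = integral\<^sup>L CM g"
  unfolding CM_def set_lebesgue_integral_def by (subst integral_restrict_space) auto

lemma space_CM[simp]: "space CM = circ" by (simp add: CM_def space_restrict_space)

lemma meas_CM: fixes h :: "real \<Rightarrow> 'b::{banach, second_countable_topology}" shows "set_borel_measurable lborel circ h \<longleftrightarrow> h \<in> borel_measurable CM"
  unfolding CM_def set_borel_measurable_def
  by (subst borel_measurable_restrict_space_iff) auto

lemma integ_CM: fixes h :: "real \<Rightarrow> 'b::{banach, second_countable_topology}" shows "set_integrable lborel circ h \<longleftrightarrow> integrable CM h"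
  unfolding CM_def by (rule set_integrable_eq) simp

lemma Lp_CM: "Lp_circ p h \<longleftrightarrow> h \<in> borel_measurable CM \<and> integrable CM (\<lambda>t. norm (h t) ^ p)"
  unfolding Lp_circ_def meas_CM integ_CM ..

lemma finite_CM: "finite_measure CM"
  by (rule finite_measureI) (simp add: CM_def circ_def emeasure_restrict_space)

lemma emeasure_CM: "emeasure CM (space CM) = ennreal (2*pi)"
  unfolding CM_def circ_def by (subst emeasure_restrict_space) auto

interpretation CMf: finite_measure CM by (rule finite_CM)

lemma measure_CM: "measure CM (space CM) = 2*pi"
  using emeasure_CM by (simp add: CMf.emeasure_eq_measure)

lemma int_exp_CM:
  fixes m :: int
  shows "integral\<^sup>L CM (\<lambda>t. exp (\<i> * of_int m * of_real t)) = (if m = 0 then 2*pi else 0)"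
proof -
  have ci: "set_integrable lborel circ (\<lambda>t. exp (\<i> * of_int m * of_real t))"
    unfolding set_integrable_def circ_def
    by (rule borel_integrable_compact) (auto intro!: continuous_intros)
  have "integral\<^sup>L CM (\<lambda>t. exp (\<i> * of_int m * of_real t)) = integral {0..2*pi} (\<lambda>t. exp (\<i> * of_int m * of_real t))"
    using set_borel_integral_eq_integral(2)[OF ci] LINT_CM[of "\<lambda>t. exp (\<i> * of_int m * of_real t)"] by (simp add: circ_def)
  also have "\<dots> = (if m = 0 then 2*pi else 0)"
  proof (cases "m = 0")
    case True then show ?thesis by (simp add: scaleR_conv_of_real)
  next
    case False
    then have "\<i> * of_int m \<noteq> 0" by simp
    from integral_exp[OF _ this, of "2*pi"] have
      "integral {0..2*pi} (\<lambda>t. exp (\<i> * of_int m * of_real t)) = (exp (\<i> * of_int m * of_real (2*pi)) - 1) / (\<i> * of_int m)"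
      by simp
    moreover have "exp (\<i> * of_int m * of_real (2*pi)) = 1"
      using exp_integer_2pi[of "of_int m"] by (simp add: mult_ac)
    ultimately show ?thesis using False by simp
  qed
  finally show ?thesis .
qed

definition cinner :: "complex^'n \<Rightarrow> complex^'n \<Rightarrow> complex" where
  "cinner x y = (\<Sum>j\<in>UNIV. x $ j * cnj (y $ j))"

lemma norm_vec_sq: "norm (x::complex^'n) ^ 2 = (\<Sum>j\<in>UNIV. norm (x $ j) ^ 2)"
  unfolding norm_vec_def L2_set_def by (simp add: sum_nonneg)

lemma cinner_self: "cinner x x = of_real (norm x ^ 2)"
  unfolding cinner_def norm_vec_sq of_real_sum by (simp add: complex_norm_square[symmetric] del: of_real_power)

lemma norm_cinner: "norm (cinner x y) \<le> norm x * norm y"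
proof -
  have "norm (cinner x y) \<le> (\<Sum>j\<in>UNIV. norm (x $ j * cnj (y $ j)))"
    unfolding cinner_def by (rule norm_sum)
  also have "\<dots> = (\<Sum>j\<in>UNIV. \<bar>norm (x $ j)\<bar> * \<bar>norm (y $ j)\<bar>)"
    by (simp add: norm_mult)
  also have "\<dots> \<le> L2_set (\<lambda>j. norm (x $ j)) UNIV * L2_set (\<lambda>j. norm (y $ j)) UNIV"
    by (rule L2_set_mult_ineq)
  finally show ?thesis by (simp add: norm_vec_def)
qed

lemma cinner_add_left: "cinner (x + y) z = cinner x z + cinner y z"
  unfolding cinner_def by (simp add: distrib_right sum.distrib)
lemma cinner_diff_left: "cinner (x - y) z = cinner x z - cinner y z"
  unfolding cinner_def by (simp add: left_diff_distrib sum_subtractf)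
lemma cinner_add_right: "cinner x (y + z) = cinner x y + cinner x z"
  unfolding cinner_def by (simp add: distrib_left sum.distrib)
lemma cinner_diff_right: "cinner x (y - z) = cinner x y - cinner x z"
  unfolding cinner_def by (simp add: right_diff_distrib sum_subtractf)
lemma cinner_scale_left: "cinner (c *s x) z = c * cinner x z"
  unfolding cinner_def by (simp add: sum_distrib_left mult_ac)
lemma cinner_scale_right: "cinner x (c *s z) = cnj c * cinner x z"
  unfolding cinner_def by (simp add: sum_distrib_left mult_ac)
lemma cinner_commute: "cinner y x = cnj (cinner x y)"
  unfolding cinner_def cnj_sum complex_cnj_mult complex_cnj_cnj by (simp add: mult.commute)
lemma cinner_sum_left: "cinner (\<Sum>i\<in>I. F i) z = (\<Sum>i\<in>I. cinner (F i) z)"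
  unfolding cinner_def sum_component sum_distrib_right by (rule sum.swap)

lemma meas_nth[measurable (raw)]:
  fixes f :: "'a \<Rightarrow> 'b::real_normed_vector^'n"
  assumes "f \<in> borel_measurable M" shows "(\<lambda>x. f x $ j) \<in> borel_measurable M"
  by (rule borel_measurable_continuous_on[OF _ assms]) (intro continuous_intros)

lemma meas_cnj[measurable (raw)]:
  assumes "f \<in> borel_measurable M" shows "(\<lambda>x. cnj (f x)) \<in> borel_measurable M"
  by (rule borel_measurable_continuous_on[OF _ assms]) (intro continuous_intros)

lemma norm_smult: "norm (c *s (x::complex^'n)) = norm c * norm x"
proof -
  have "norm (c *s x) ^ 2 = (norm c * norm x) ^ 2"
    unfolding norm_vec_sq power_mult_distrib by (simp add: norm_mult power_mult_distrib sum_distrib_left)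
  then show ?thesis by (simp add: power2_eq_iff_nonneg)
qed

lemma sq_tri: "norm (x + y) ^ 2 \<le> 2 * norm x ^ 2 + 2 * norm (y::'a::real_normed_vector) ^ 2"
proof -
  have "norm (x + y) ^ 2 \<le> (norm x + norm y) ^ 2"
    by (simp add: norm_triangle_ineq power_mono)
  also have "\<dots> \<le> 2 * norm x ^ 2 + 2 * norm y ^ 2"
    using zero_le_power2[of "norm x - norm y"] by (simp add: power2_eq_square algebra_simps)
  finally show ?thesis .
qed

lemma amgm_lim:
  fixes x A B :: real
  assumes "A \<ge> 0" "B \<ge> 0" "\<And>a. a > 0 \<Longrightarrow> x \<le> (a * A + B / a) / 2"
  shows "x \<le> sqrt A * sqrt B"
proof (cases "A > 0 \<and> B > 0")
  case True
  define a where "a = sqrt B / sqrt A"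
  have a: "a > 0" using True by (simp add: a_def)
  have sA: "sqrt A > 0" "sqrt B > 0" using True by auto
  have "a * A = sqrt B / sqrt A * (sqrt A * sqrt A)" using assms by (simp add: a_def)
  also have "\<dots> = sqrt A * sqrt B" using sA by (simp add: field_simps)
  finally have e1: "a * A = sqrt A * sqrt B" .
  have "B / a = (sqrt B * sqrt B) / (sqrt B / sqrt A)" using assms by (simp add: a_def)
  also have "\<dots> = sqrt A * sqrt B" using sA by (simp add: field_simps)
  finally have e2: "B / a = sqrt A * sqrt B" .
  show ?thesis using assms(3)[OF a] e1 e2 by simp
next
  case False
  show ?thesis
  proof (rule ccontr)
    assume c: "\<not> x \<le> sqrt A * sqrt B"
    from False assms have "A = 0 \<or> B = 0" by auto
    then have x0: "x > 0" using c by auto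
    show False
    proof (cases "A = 0")
      case True
      define a where "a = B / x + 1"
      have "B / x \<ge> 0" using x0 assms by simp
      then have a: "a > 0" by (simp add: a_def)
      have "B / a \<le> x" using x0 assms unfolding a_def by (simp add: field_simps)
      then show False using assms(3)[OF a] True x0 by simp
    next
      case False
      then have B0: "B = 0" using \<open>A = 0 \<or> B = 0\<close> by auto
      define a where "a = x / (A + 1)"
      have a: "a > 0" using x0 assms by (simp add: a_def)
      have "a * A \<le> x" using x0 assms unfolding a_def by (simp add: field_simps)
      then show False using assms(3)[OF a] B0 x0 by simp
    qed
  qed
qed

subsection \<open>L2 on the circle\<close>

definition L2 :: "(real \<Rightarrow> complex^'n) set" where "L2 = {h. Lp_circ 2 h}"

lemma L2_iff: "h \<in> L2 \<longleftrightarrow> h \<in> borel_measurable CM \<and> integrable CM (\<lambda>t. norm (h t) ^ 2)"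
  unfolding L2_def by (simp add: Lp_CM)

lemma L2_meas: "h \<in> L2 \<Longrightarrow> h \<in> borel_measurable CM" by (simp add: L2_iff)
lemma L2_sq: "h \<in> L2 \<Longrightarrow> integrable CM (\<lambda>t. norm (h t) ^ 2)" by (simp add: L2_iff)

lemma L2_integrable: assumes "h \<in> L2" shows "integrable CM h"
proof (rule Bochner_Integration.integrable_bound[of CM "\<lambda>t. 1 + norm (h t) ^ 2"])
  show "integrable CM (\<lambda>t. 1 + norm (h t) ^ 2)" using L2_sq[OF assms] by simp
  show "h \<in> borel_measurable CM" using L2_meas[OF assms] .
  show "AE t in CM. norm (h t) \<le> norm (1 + norm (h t) ^ 2)"
  proof (intro AE_I2)
    fix t have "norm (h t) \<le> 1 + norm (h t) ^ 2"
      using zero_le_power2[of "norm (h t) - 1/2"] by (simp add: power2_eq_square algebra_simps) 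
    then show "norm (h t) \<le> norm (1 + norm (h t) ^ 2)" by simp
  qed
qed

lemma L2_cinner_integrable:
  assumes "g \<in> L2" "h \<in> L2" shows "integrable CM (\<lambda>t. cinner (g t) (h t))"
proof (rule Bochner_Integration.integrable_bound[of CM "\<lambda>t. norm (g t) ^ 2 + norm (h t) ^ 2"])
  show "integrable CM (\<lambda>t. norm (g t) ^ 2 + norm (h t) ^ 2)" using L2_sq assms by (intro Bochner_Integration.integrable_add) auto
  have [measurable]: "g \<in> borel_measurable CM" "h \<in> borel_measurable CM" using assms L2_meas by auto
  show "(\<lambda>t. cinner (g t) (h t)) \<in> borel_measurable CM" unfolding cinner_def by measurable
  show "AE t in CM. norm (cinner (g t) (h t)) \<le> norm (norm (g t) ^ 2 + norm (h t) ^ 2)"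
  proof (intro AE_I2)
    fix t
    have "norm (cinner (g t) (h t)) \<le> norm (g t) * norm (h t)" by (rule norm_cinner)
    also have "\<dots> \<le> norm (g t) ^ 2 + norm (h t) ^ 2"
      using sum_squares_bound[of "norm (g t)" "norm (h t)"] zero_le_power2[of "norm (g t)"] zero_le_power2[of "norm (h t)"] by linarith
    finally show "norm (cinner (g t) (h t)) \<le> norm (norm (g t) ^ 2 + norm (h t) ^ 2)" by simp
  qed
qed

lemma meas_smult:
  fixes e :: "'a \<Rightarrow> complex" and g :: "'a \<Rightarrow> complex^'n"
  assumes "e \<in> borel_measurable M" "g \<in> borel_measurable M"
  shows "(\<lambda>t. e t *s g t) \<in> borel_measurable M"
proof -
  have c: "continuous_on UNIV (\<lambda>x::complex \<times> (complex^'n). \<chi> j. fst x * snd x $ j)"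
    by (intro continuous_intros continuous_on_vec_lambda)
  have eq: "(\<lambda>x::complex \<times> (complex^'n). \<chi> j. fst x * snd x $ j) = (\<lambda>x. fst x *s snd x)"
    by (auto simp: vec_eq_iff)
  from c have "continuous_on UNIV (\<lambda>x::complex \<times> (complex^'n). fst x *s snd x)" unfolding eq .
  then show ?thesis using borel_measurable_continuous_Pair[OF assms] by blast
qed

lemma L2_add: assumes "g \<in> L2" "h \<in> L2" shows "(\<lambda>t. g t + h t) \<in> L2"
proof -
  have [measurable]: "g \<in> borel_measurable CM" "h \<in> borel_measurable CM" using assms L2_meas by auto
  have "integrable CM (\<lambda>t. norm (g t + h t) ^ 2)"
  proof (rule Bochner_Integration.integrable_bound[of CM "\<lambda>t. 2 * norm (g t) ^ 2 + 2 * norm (h t) ^ 2"])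
    show "integrable CM (\<lambda>t. 2 * norm (g t) ^ 2 + 2 * norm (h t) ^ 2)"
      using L2_sq assms by (intro Bochner_Integration.integrable_add integrable_mult_right) auto
  qed (auto intro!: AE_I2 sq_tri[THEN order_trans])
  then show ?thesis by (simp add: L2_iff)
qed

lemma L2_scale: assumes "g \<in> L2" shows "(\<lambda>t. c *s g t) \<in> L2"
proof -
  have [measurable]: "g \<in> borel_measurable CM" using assms L2_meas by auto
  have m: "(\<lambda>t. c *s g t) \<in> borel_measurable CM" by (rule meas_smult) auto
  have "integrable CM (\<lambda>t. norm c ^ 2 * norm (g t) ^ 2)" using L2_sq[OF assms] by simp
  then have "integrable CM (\<lambda>t. norm (c *s g t) ^ 2)" by (simp add: norm_smult power_mult_distrib)
  with m show ?thesis by (simp add: L2_iff)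
qed

lemma L2_mult:
  assumes "g \<in> L2" "e \<in> borel_measurable CM" "\<And>t. norm (e t) \<le> B"
  shows "(\<lambda>t. e t *s g t) \<in> L2"
proof -
  have [measurable]: "g \<in> borel_measurable CM" "e \<in> borel_measurable CM" using assms L2_meas by auto
  have m: "(\<lambda>t. e t *s g t) \<in> borel_measurable CM" by (rule meas_smult) auto
  have "integrable CM (\<lambda>t. norm (e t *s g t) ^ 2)"
  proof (rule Bochner_Integration.integrable_bound[of CM "\<lambda>t. B^2 * norm (g t) ^ 2"])
    show "integrable CM (\<lambda>t. B^2 * norm (g t) ^ 2)" using L2_sq[OF assms(1)] by simp
    show "(\<lambda>t. norm (e t *s g t) ^ 2) \<in> borel_measurable CM" using m by simp
    show "AE t in CM. norm (norm (e t *s g t) ^ 2) \<le> norm (B^2 * norm (g t) ^ 2)"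
    proof (intro AE_I2)
      fix t
      have "norm (e t) ^ 2 \<le> B ^ 2" using assms(3)[of t] by (simp add: power_mono)
      then have "norm (e t) ^ 2 * norm (g t) ^ 2 \<le> B^2 * norm (g t) ^ 2" by (simp add: mult_right_mono)
      then show "norm (norm (e t *s g t) ^ 2) \<le> norm (B^2 * norm (g t) ^ 2)"
        by (simp add: norm_smult power_mult_distrib)
    qed
  qed
  with m show ?thesis by (simp add: L2_iff)
qed

lemma L2_const: "(\<lambda>t. v) \<in> L2"
  by (simp add: L2_iff)

lemma L2_zero: "(\<lambda>t. 0) \<in> L2" by (rule L2_const)

lemma L2_neg: "g \<in> L2 \<Longrightarrow> (\<lambda>t. - g t) \<in> L2"
  using L2_scale[of g "-1"] by (simp add: vector_sneg_minus1[symmetric])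

lemma L2_diff: "g \<in> L2 \<Longrightarrow> h \<in> L2 \<Longrightarrow> (\<lambda>t. g t - h t) \<in> L2"
  using L2_add[of g "\<lambda>t. - h t"] L2_neg[of h] by simp

lemma L2_sum: "finite I \<Longrightarrow> (\<And>i. i \<in> I \<Longrightarrow> F i \<in> L2) \<Longrightarrow> (\<lambda>t. \<Sum>i\<in>I. F i t) \<in> L2"
proof (induction I rule: finite_induct)
  case empty then show ?case using L2_zero by simp
next
  case (insert x J)
  then show ?case using L2_add[of "F x" "\<lambda>t. \<Sum>i\<in>J. F i t"] by simp
qed




subsection \<open>Inner product and norm\<close>

definition Nn :: "(real \<Rightarrow> complex^'n) \<Rightarrow> real" where
  "Nn h = (1/(2*pi)) * integral\<^sup>L CM (\<lambda>t. norm (h t) ^ 2)"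

lemma ip2_CM: "ip2 g h = (1/(2*pi)) * integral\<^sup>L CM (\<lambda>t. cinner (g t) (h t))"
  unfolding ip2_def cinner_def by (simp add: LINT_CM)

lemma dist2_CM: "dist2 g h = sqrt (Nn (\<lambda>t. g t - h t))"
  unfolding dist2_def Nn_def by (simp add: LINT_CM)

lemma Nn_nonneg: "Nn h \<ge> 0"
  unfolding Nn_def by (intro mult_nonneg_nonneg integral_nonneg_AE) auto

lemma ip2_add_left: "g \<in> L2 \<Longrightarrow> h \<in> L2 \<Longrightarrow> k \<in> L2 \<Longrightarrow> ip2 (\<lambda>t. g t + h t) k = ip2 g k + ip2 h k"
  by (simp add: ip2_CM cinner_add_left Bochner_Integration.integral_add L2_cinner_integrable distrib_left)

lemma ip2_diff_left: "g \<in> L2 \<Longrightarrow> h \<in> L2 \<Longrightarrow> k \<in> L2 \<Longrightarrow> ip2 (\<lambda>t. g t - h t) k = ip2 g k - ip2 h k"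
  by (simp add: ip2_CM cinner_diff_left Bochner_Integration.integral_diff L2_cinner_integrable right_diff_distrib)

lemma ip2_scale_left: "ip2 (\<lambda>t. c *s g t) k = c * ip2 g k"
  by (simp add: ip2_CM cinner_scale_left)

lemma ip2_commute: "ip2 h g = cnj (ip2 g h)"
  by (simp add: ip2_CM cinner_commute[of "h _"])

lemma ip2_sum_left: "finite I \<Longrightarrow> (\<And>i. i \<in> I \<Longrightarrow> F i \<in> L2) \<Longrightarrow> k \<in> L2 \<Longrightarrow>
   ip2 (\<lambda>t. \<Sum>i\<in>I. F i t) k = (\<Sum>i\<in>I. ip2 (F i) k)"
  by (simp add: ip2_CM cinner_sum_left Bochner_Integration.integral_sum L2_cinner_integrable sum_distrib_left)

lemma ip2_self: "ip2 g g = of_real (Nn g)"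
  by (simp add: ip2_CM Nn_def cinner_self del: of_real_power)

lemma ip2_add_right: "g \<in> L2 \<Longrightarrow> h \<in> L2 \<Longrightarrow> k \<in> L2 \<Longrightarrow> ip2 k (\<lambda>t. g t + h t) = ip2 k g + ip2 k h"
  by (subst (1 2 3) ip2_commute) (simp add: ip2_add_left)

lemma ip2_diff_right: "g \<in> L2 \<Longrightarrow> h \<in> L2 \<Longrightarrow> k \<in> L2 \<Longrightarrow> ip2 k (\<lambda>t. g t - h t) = ip2 k g - ip2 k h"
  by (subst (1 2 3) ip2_commute) (simp add: ip2_diff_left)

lemma ip2_scale_right: "ip2 k (\<lambda>t. c *s g t) = cnj c * ip2 k g"
  by (subst (1 2) ip2_commute) (simp add: ip2_scale_left)

lemma amgm_pt:
  fixes r p q :: real assumes r: "r > 0" shows "p * q \<le> (r * p^2 + q^2 / r) / 2"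
proof -
  have "0 \<le> (r*p - q)^2" by simp
  hence "2*r*(p*q) \<le> r*(r*p^2) + q^2" by (simp add: power2_eq_square algebra_simps)
  hence "(2*r*(p*q)) / (2*r) \<le> (r*(r*p^2) + q^2) / (2*r)" using r by (intro divide_right_mono) auto
  also have "(2*r*(p*q)) / (2*r) = p * q" using r by simp
  also have "(r*(r*p^2) + q^2) / (2*r) = (r * p^2 + q^2 / r) / 2" using r by (simp add: field_simps power2_eq_square)
  finally show ?thesis .
qed

lemma L2_normprod_integrable:
  assumes "g \<in> L2" "h \<in> L2" shows "integrable CM (\<lambda>t. norm (g t) * norm (h t))"
proof (rule Bochner_Integration.integrable_bound[of CM "\<lambda>t. norm (g t) ^ 2 + norm (h t) ^ 2"])
  show "integrable CM (\<lambda>t. norm (g t) ^ 2 + norm (h t) ^ 2)" using L2_sq[OF assms(1)] L2_sq[OF assms(2)] by (intro Bochner_Integration.integrable_add) auto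
  have [measurable]: "g \<in> borel_measurable CM" "h \<in> borel_measurable CM" using L2_meas[OF assms(1)] L2_meas[OF assms(2)] by auto
  show "(\<lambda>t. norm (g t) * norm (h t)) \<in> borel_measurable CM" by measurable
  show "AE t in CM. norm (norm (g t) * norm (h t)) \<le> norm (norm (g t) ^ 2 + norm (h t) ^ 2)"
  proof (intro AE_I2)
    fix t
    have "norm (g t) * norm (h t) \<le> norm (g t) ^ 2 + norm (h t) ^ 2"
      using sum_squares_bound[of "norm (g t)" "norm (h t)"] zero_le_power2[of "norm (g t)"] zero_le_power2[of "norm (h t)"] by linarith
    then show "norm (norm (g t) * norm (h t)) \<le> norm (norm (g t) ^ 2 + norm (h t) ^ 2)" by simp
  qed
qed

lemma int_CS:
  assumes "g \<in> L2" "h \<in> L2"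
  shows "integral\<^sup>L CM (\<lambda>t. norm (g t) * norm (h t)) \<le>
    sqrt (integral\<^sup>L CM (\<lambda>t. norm (g t) ^ 2)) * sqrt (integral\<^sup>L CM (\<lambda>t. norm (h t) ^ 2))"
proof (rule amgm_lim)
  show "0 \<le> integral\<^sup>L CM (\<lambda>t. norm (g t) ^ 2)" "0 \<le> integral\<^sup>L CM (\<lambda>t. norm (h t) ^ 2)"
    by (auto intro!: integral_nonneg_AE)
  fix a :: real assume a: "a > 0"
  have "integral\<^sup>L CM (\<lambda>t. norm (g t) * norm (h t)) \<le> integral\<^sup>L CM (\<lambda>t. (a * norm (g t) ^ 2 + norm (h t) ^ 2 / a) / 2)"
    using assms a L2_sq[OF assms(1)] L2_sq[OF assms(2)]
    by (intro integral_mono L2_normprod_integrable amgm_pt) (auto intro!: integrable_divide Bochner_Integration.integrable_add integrable_mult_right)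
  also have "\<dots> = (a * integral\<^sup>L CM (\<lambda>t. norm (g t) ^ 2) + integral\<^sup>L CM (\<lambda>t. norm (h t) ^ 2) / a) / 2"
    using assms L2_sq[OF assms(1)] L2_sq[OF assms(2)] by (simp add: Bochner_Integration.integral_add integrable_mult_right integrable_divide)
  finally show "integral\<^sup>L CM (\<lambda>t. norm (g t) * norm (h t)) \<le> (a * integral\<^sup>L CM (\<lambda>t. norm (g t) ^ 2) + integral\<^sup>L CM (\<lambda>t. norm (h t) ^ 2) / a) / 2" .
qed

lemma int_CS_N:
  assumes "g \<in> L2" "h \<in> L2"
  shows "(1/(2*pi)) * integral\<^sup>L CM (\<lambda>t. norm (g t) * norm (h t)) \<le> sqrt (Nn g) * sqrt (Nn h)"
proof -
  have "(1/(2*pi)) * integral\<^sup>L CM (\<lambda>t. norm (g t) * norm (h t)) \<le>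
     (1/(2*pi)) * (sqrt (integral\<^sup>L CM (\<lambda>t. norm (g t) ^ 2)) * sqrt (integral\<^sup>L CM (\<lambda>t. norm (h t) ^ 2)))"
    using int_CS[OF assms] by (intro mult_left_mono) auto
  also have "\<dots> = sqrt (Nn g) * sqrt (Nn h)"
  proof -
    have "sqrt (Nn g) * sqrt (Nn h) = (sqrt (1/(2*pi)) * sqrt (1/(2*pi))) *
       (sqrt (integral\<^sup>L CM (\<lambda>t. norm (g t) ^ 2)) * sqrt (integral\<^sup>L CM (\<lambda>t. norm (h t) ^ 2)))"
      unfolding Nn_def real_sqrt_mult by (simp only: mult_ac)
    also have "sqrt (1/(2*pi)) * sqrt (1/(2*pi)) = 1/(2*pi)" by simp
    finally show ?thesis by simp
  qed
  finally show ?thesis .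
qed

lemma ip2_CS:
  assumes "g \<in> L2" "h \<in> L2"
  shows "norm (ip2 g h) \<le> sqrt (Nn g) * sqrt (Nn h)"
proof -
  have "norm (ip2 g h) = (1/(2*pi)) * norm (integral\<^sup>L CM (\<lambda>t. cinner (g t) (h t)))"
    by (simp add: ip2_CM norm_mult norm_divide)
  also have "\<dots> \<le> (1/(2*pi)) * integral\<^sup>L CM (\<lambda>t. norm (cinner (g t) (h t)))"
    by (intro mult_left_mono integral_norm_bound) auto
  also have "\<dots> \<le> (1/(2*pi)) * integral\<^sup>L CM (\<lambda>t. norm (g t) * norm (h t))"
    using assms by (intro mult_left_mono integral_mono L2_normprod_integrable norm_cinner integrable_norm L2_cinner_integrable) auto
  also have "\<dots> \<le> sqrt (Nn g) * sqrt (Nn h)" by (rule int_CS_N[OF assms])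
  finally show ?thesis .
qed

lemma Nn_add:
  assumes "g \<in> L2" "h \<in> L2"
  shows "sqrt (Nn (\<lambda>t. g t + h t)) \<le> sqrt (Nn g) + sqrt (Nn h)"
proof -
  have "Nn (\<lambda>t. g t + h t) \<le> (1/(2*pi)) * integral\<^sup>L CM (\<lambda>t. norm (g t) ^ 2 + 2 * (norm (g t) * norm (h t)) + norm (h t) ^ 2)"
    unfolding Nn_def
  proof (intro mult_left_mono integral_mono)
    show "integrable CM (\<lambda>t. norm (g t + h t) ^ 2)" using L2_add[OF assms] by (simp add: L2_iff)
    show "integrable CM (\<lambda>t. norm (g t) ^ 2 + 2 * (norm (g t) * norm (h t)) + norm (h t) ^ 2)"
      using L2_sq[OF assms(1)] L2_sq[OF assms(2)] L2_normprod_integrable[OF assms] by (intro Bochner_Integration.integrable_add integrable_mult_right) auto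
    fix t
    have "norm (g t + h t) \<le> norm (g t) + norm (h t)" by (rule norm_triangle_ineq)
    then have "norm (g t + h t) ^ 2 \<le> (norm (g t) + norm (h t)) ^ 2" by (simp add: power_mono)
    then show "norm (g t + h t) ^ 2 \<le> norm (g t) ^ 2 + 2 * (norm (g t) * norm (h t)) + norm (h t) ^ 2"
      by (simp add: power2_sum)
  qed auto
  also have "\<dots> = Nn g + 2 * ((1/(2*pi)) * integral\<^sup>L CM (\<lambda>t. norm (g t) * norm (h t))) + Nn h"
  proof -
    have i1: "integrable CM (\<lambda>t. norm (g t) ^ 2)" "integrable CM (\<lambda>t. norm (h t) ^ 2)"
      "integrable CM (\<lambda>t. 2 * (norm (g t) * norm (h t)))"
      using L2_sq[OF assms(1)] L2_sq[OF assms(2)] L2_normprod_integrable[OF assms] by auto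
    have "integral\<^sup>L CM (\<lambda>t. norm (g t) ^ 2 + 2 * (norm (g t) * norm (h t)) + norm (h t) ^ 2)
      = integral\<^sup>L CM (\<lambda>t. norm (g t) ^ 2) + integral\<^sup>L CM (\<lambda>t. 2 * (norm (g t) * norm (h t))) + integral\<^sup>L CM (\<lambda>t. norm (h t) ^ 2)"
      using i1 by (simp add: Bochner_Integration.integral_add)
    also have "integral\<^sup>L CM (\<lambda>t. 2 * (norm (g t) * norm (h t))) = 2 * integral\<^sup>L CM (\<lambda>t. norm (g t) * norm (h t))"
      by simp
    finally show ?thesis unfolding Nn_def by (simp add: algebra_simps)
  qed
  also have "\<dots> \<le> Nn g + 2 * (sqrt (Nn g) * sqrt (Nn h)) + Nn h"
    using int_CS_N[OF assms] by simp
  also have "\<dots> = (sqrt (Nn g) + sqrt (Nn h)) ^ 2"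
    using Nn_nonneg[of g] Nn_nonneg[of h] by (simp add: power2_sum)
  finally have "sqrt (Nn (\<lambda>t. g t + h t)) \<le> sqrt ((sqrt (Nn g) + sqrt (Nn h)) ^ 2)"
    by (rule real_sqrt_le_mono)
  also have "\<dots> = sqrt (Nn g) + sqrt (Nn h)" using Nn_nonneg[of g] Nn_nonneg[of h] by simp
  finally show ?thesis .
qed




lemma L1_bound:
  assumes "g \<in> L2"
  shows "integral\<^sup>L CM (\<lambda>t. norm (g t)) \<le> sqrt (integral\<^sup>L CM (\<lambda>t. norm (g t) ^ 2)) * sqrt (2*pi)"
proof (rule amgm_lim)
  show "0 \<le> integral\<^sup>L CM (\<lambda>t. norm (g t) ^ 2)" by (auto intro!: integral_nonneg_AE)
  show "0 \<le> 2*pi" by simp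
  fix a :: real assume a: "a > 0"
  have ig: "integrable CM (\<lambda>t. norm (g t))" using L2_integrable[OF assms] by simp
  have i2: "integrable CM (\<lambda>t. norm (g t) ^ 2)" using L2_sq[OF assms] .
  have "integral\<^sup>L CM (\<lambda>t. norm (g t)) \<le> integral\<^sup>L CM (\<lambda>t. (a * norm (g t) ^ 2 + 1 / a) / 2)"
  proof (rule integral_mono)
    show "integrable CM (\<lambda>t. (a * norm (g t) ^ 2 + 1 / a) / 2)"
      using i2 by (intro integrable_divide Bochner_Integration.integrable_add integrable_mult_right) auto
    fix t show "norm (g t) \<le> (a * norm (g t) ^ 2 + 1 / a) / 2"
      using amgm_pt[OF a, of "norm (g t)" 1] by simp
  qed (rule ig)
  also have "\<dots> = (a * integral\<^sup>L CM (\<lambda>t. norm (g t) ^ 2) + 2 * pi / a) / 2"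
    using i2 measure_CM by (simp add: Bochner_Integration.integral_add integrable_mult_right)
  finally show "integral\<^sup>L CM (\<lambda>t. norm (g t)) \<le> (a * integral\<^sup>L CM (\<lambda>t. norm (g t) ^ 2) + 2 * pi / a) / 2" .
qed

lemma int_sq_Nn: "integral\<^sup>L CM (\<lambda>t. norm (g t) ^ 2) = 2 * pi * Nn g"
  unfolding Nn_def by simp

lemma L2_complete:
  assumes u: "\<And>n. u n \<in> L2"
    and C: "\<And>e. e > 0 \<Longrightarrow> \<exists>N. \<forall>m\<ge>N. \<forall>n\<ge>N. Nn (\<lambda>t. u m t - u n t) < e"
  shows "\<exists>v\<in>L2. (\<lambda>n. Nn (\<lambda>t. u n t - v t)) \<longlonglongrightarrow> 0"
proof -
  have um[measurable]: "\<And>n. u n \<in> borel_measurable CM" using u L2_meas by auto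
  have ui: "\<And>n. integrable CM (u n)" using u L2_integrable by auto
  have L1C: "\<exists>N. \<forall>i\<ge>N. \<forall>j\<ge>N. integral\<^sup>L CM (\<lambda>t. norm (u i t - u j t)) < e" if e: "e > 0" for e
  proof -
    have "(e/(2*pi))^2 > 0" using e by simp
    from C[OF this] obtain N where N: "\<forall>m\<ge>N. \<forall>n\<ge>N. Nn (\<lambda>t. u m t - u n t) < (e/(2*pi))^2" by auto
    show ?thesis
    proof (intro exI allI impI)
      fix i j assume ij: "i \<ge> N" "j \<ge> N"
      have g: "(\<lambda>t. u i t - u j t) \<in> L2" using L2_diff u by auto
      have "integral\<^sup>L CM (\<lambda>t. norm (u i t - u j t)) \<le> sqrt (2 * pi * Nn (\<lambda>t. u i t - u j t)) * sqrt (2*pi)"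
        using L1_bound[OF g] by (simp add: int_sq_Nn)
      also have "\<dots> = (sqrt (2*pi) * sqrt (2*pi)) * sqrt (Nn (\<lambda>t. u i t - u j t))"
        by (simp only: real_sqrt_mult mult_ac)
      also have "sqrt (2*pi) * sqrt (2*pi) = 2 * pi" by simp
      also have "sqrt (Nn (\<lambda>t. u i t - u j t)) < sqrt ((e/(2*pi))^2)"
        using N ij by (intro real_sqrt_less_mono) auto
      also have "sqrt ((e/(2*pi))^2) = e/(2*pi)" using e by simp
      finally show "integral\<^sup>L CM (\<lambda>t. norm (u i t - u j t)) < e" by simp
    qed
  qed
  obtain r where r: "strict_mono r" and ae: "AE t in CM. Cauchy (\<lambda>i. u (r i) t)"
    using cauchy_L1_AE_cauchy_subseq[OF ui L1C] by blast
  define v where "v t = lim (\<lambda>i. u (r i) t)" for t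
  have vm[measurable]: "v \<in> borel_measurable CM" unfolding v_def by measurable
  have conv: "AE t in CM. (\<lambda>i. u (r i) t) \<longlonglongrightarrow> v t"
    using ae by eventually_elim (simp add: v_def Cauchy_convergent_iff convergent_LIMSEQ_iff)
  have key: "(\<lambda>t. u n t - v t) \<in> L2 \<and> Nn (\<lambda>t. u n t - v t) \<le> e"
    if e: "e > 0" and N: "\<forall>m\<ge>N. \<forall>n\<ge>N. Nn (\<lambda>t. u m t - u n t) < e" and n: "n \<ge> N" for e N n
  proof -
    define f where "f i t = ennreal (norm (u n t - u (r i) t) ^ 2)" for i t
    define F where "F t = ennreal (norm (u n t - v t) ^ 2)" for t
    have fm[measurable]: "\<And>i. f i \<in> borel_measurable CM" unfolding f_def by measurable
    have Fm[measurable]: "F \<in> borel_measurable CM" unfolding F_def by measurable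
    have lf: "AE t in CM. liminf (\<lambda>i. f i t) = F t"
      using conv
    proof eventually_elim
      case (elim t)
      have "(\<lambda>i. f i t) \<longlonglongrightarrow> F t" unfolding f_def F_def
        by (intro tendsto_ennrealI tendsto_intros elim)
      then show ?case by (intro lim_imp_Liminf) auto
    qed
    have fi: "integral\<^sup>N CM (f i) = ennreal (2 * pi * Nn (\<lambda>t. u n t - u (r i) t))" for i
    proof -
      have "(\<lambda>t. u n t - u (r i) t) \<in> L2" using u L2_diff by auto
      then have "integral\<^sup>N CM (f i) = ennreal (integral\<^sup>L CM (\<lambda>t. norm (u n t - u (r i) t) ^ 2))"
        unfolding f_def by (intro nn_integral_eq_integral) (auto simp: L2_iff)
      then show ?thesis by (simp add: int_sq_Nn)
    qed
    have "integral\<^sup>N CM F = (\<integral>\<^sup>+ t. liminf (\<lambda>i. f i t) \<partial>CM)"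
      using lf by (intro nn_integral_cong_AE) auto
    also have "\<dots> \<le> liminf (\<lambda>i. integral\<^sup>N CM (f i))"
      by (intro nn_integral_liminf) measurable
    also have "\<dots> \<le> ennreal (2 * pi * e)"
    proof (intro Liminf_le)
      show "\<forall>\<^sub>F i in sequentially. integral\<^sup>N CM (f i) \<le> ennreal (2 * pi * e)"
        unfolding eventually_sequentially
      proof (intro exI allI impI)
        fix i assume "N \<le> i"
        then have "r i \<ge> N" using seq_suble[OF r, of i] by linarith
        then have "Nn (\<lambda>t. u n t - u (r i) t) < e" using N n by auto
        then show "integral\<^sup>N CM (f i) \<le> ennreal (2 * pi * e)" unfolding fi
          by (intro ennreal_leI) simp
      qed
    qed simp
    finally have Fle: "integral\<^sup>N CM F \<le> ennreal (2 * pi * e)" .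
    have Fint: "integrable CM (\<lambda>t. norm (u n t - v t) ^ 2)"
    proof (subst integrable_iff_bounded, intro conjI)
      show "(\<lambda>t. norm (u n t - v t) ^ 2) \<in> borel_measurable CM" by measurable
      have "(\<integral>\<^sup>+ t. ennreal (norm (norm (u n t - v t) ^ 2)) \<partial>CM) = integral\<^sup>N CM F"
        unfolding F_def by simp
      also have "\<dots> < \<infinity>" using Fle by (simp add: le_less_trans)
      finally show "(\<integral>\<^sup>+ t. ennreal (norm (norm (u n t - v t) ^ 2)) \<partial>CM) < \<infinity>" .
    qed
    have inL2: "(\<lambda>t. u n t - v t) \<in> L2" using Fint by (simp add: L2_iff)
    have "ennreal (integral\<^sup>L CM (\<lambda>t. norm (u n t - v t) ^ 2)) = integral\<^sup>N CM F"
      unfolding F_def using Fint by (intro nn_integral_eq_integral[symmetric]) auto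
    with Fle have "ennreal (integral\<^sup>L CM (\<lambda>t. norm (u n t - v t) ^ 2)) \<le> ennreal (2 * pi * e)"
      by simp
    then have "integral\<^sup>L CM (\<lambda>t. norm (u n t - v t) ^ 2) \<le> 2 * pi * e"
      using e by (subst (asm) ennreal_le_iff) auto
    then have "Nn (\<lambda>t. u n t - v t) \<le> e" by (simp add: int_sq_Nn)
    with inL2 show ?thesis by simp
  qed
  obtain N1 where N1: "\<forall>m\<ge>N1. \<forall>n\<ge>N1. Nn (\<lambda>t. u m t - u n t) < 1" using C[of 1] by auto
  have "(\<lambda>t. u N1 t - v t) \<in> L2" using key[OF _ N1, of N1] by simp
  then have "(\<lambda>t. u N1 t - (u N1 t - v t)) \<in> L2" using L2_diff u by blast
  then have vL2: "v \<in> L2" by simp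
  have "(\<lambda>n. Nn (\<lambda>t. u n t - v t)) \<longlonglongrightarrow> 0"
  proof (rule LIMSEQ_I)
    fix e :: real assume e: "e > 0"
    then have "e/2 > 0" by simp
    from C[OF this] obtain N where N: "\<forall>m\<ge>N. \<forall>n\<ge>N. Nn (\<lambda>t. u m t - u n t) < e/2" by auto
    show "\<exists>no. \<forall>n\<ge>no. norm (Nn (\<lambda>t. u n t - v t) - 0) < e"
    proof (intro exI allI impI)
      fix n assume "n \<ge> N"
      then have "Nn (\<lambda>t. u n t - v t) \<le> e/2" using key[OF \<open>e/2 > 0\<close> N] by blast
      then show "norm (Nn (\<lambda>t. u n t - v t) - 0) < e" using Nn_nonneg[of "\<lambda>t. u n t - v t"] e by simp
    qed
  qed
  with vL2 show ?thesis by blast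
qed




lemma parallelo: "norm (x+y)^2 + norm (x-y)^2 = 2*norm x^2 + 2*norm (y::'a::real_inner)^2"
  unfolding power2_norm_eq_inner
  by (simp add: inner_add_left inner_add_right inner_diff_left inner_diff_right inner_commute)

lemma Nn_parallelo:
  assumes "a \<in> L2" "b \<in> L2"
  shows "Nn (\<lambda>t. a t + b t) + Nn (\<lambda>t. a t - b t) = 2 * Nn a + 2 * Nn b"
proof -
  have i: "integrable CM (\<lambda>t. norm (a t + b t) ^ 2)" "integrable CM (\<lambda>t. norm (a t - b t) ^ 2)"
    "integrable CM (\<lambda>t. 2 * norm (a t) ^ 2)" "integrable CM (\<lambda>t. 2 * norm (b t) ^ 2)"
    using L2_add[OF assms] L2_diff[OF assms] L2_sq[OF assms(1)] L2_sq[OF assms(2)] by (auto simp: L2_iff)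
  have "integral\<^sup>L CM (\<lambda>t. norm (a t + b t) ^ 2) + integral\<^sup>L CM (\<lambda>t. norm (a t - b t) ^ 2)
     = integral\<^sup>L CM (\<lambda>t. norm (a t + b t) ^ 2 + norm (a t - b t) ^ 2)"
    using i by (simp add: Bochner_Integration.integral_add)
  also have "\<dots> = integral\<^sup>L CM (\<lambda>t. 2 * norm (a t) ^ 2 + 2 * norm (b t) ^ 2)"
    by (simp add: parallelo)
  also have "\<dots> = 2 * integral\<^sup>L CM (\<lambda>t. norm (a t) ^ 2) + 2 * integral\<^sup>L CM (\<lambda>t. norm (b t) ^ 2)"
    using i by (simp add: Bochner_Integration.integral_add)
  finally have eq: "integral\<^sup>L CM (\<lambda>t. norm (a t + b t) ^ 2) + integral\<^sup>L CM (\<lambda>t. norm (a t - b t) ^ 2)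
     = 2 * integral\<^sup>L CM (\<lambda>t. norm (a t) ^ 2) + 2 * integral\<^sup>L CM (\<lambda>t. norm (b t) ^ 2)" .
  have "Nn (\<lambda>t. a t + b t) + Nn (\<lambda>t. a t - b t) = (1/(2*pi)) * (integral\<^sup>L CM (\<lambda>t. norm (a t + b t) ^ 2) + integral\<^sup>L CM (\<lambda>t. norm (a t - b t) ^ 2))"
    unfolding Nn_def by (simp only: distrib_left)
  also have "\<dots> = (1/(2*pi)) * (2 * integral\<^sup>L CM (\<lambda>t. norm (a t) ^ 2) + 2 * integral\<^sup>L CM (\<lambda>t. norm (b t) ^ 2))"
    by (simp only: eq)
  also have "\<dots> = 2 * Nn a + 2 * Nn b" unfolding Nn_def by (simp only: distrib_left mult_ac)
  finally show ?thesis .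
qed

lemma Nn_scale: "Nn (\<lambda>t. c *s h t) = (cmod c)^2 * Nn h"
  unfolding Nn_def by (simp add: norm_smult power_mult_distrib)

lemma Nn_swap: "Nn (\<lambda>t. a t - b t) = Nn (\<lambda>t. b t - a t)"
  unfolding Nn_def by (simp add: norm_minus_commute)

lemma Nn_tri:
  assumes "a \<in> L2" "b \<in> L2" "c \<in> L2"
  shows "sqrt (Nn (\<lambda>t. a t - c t)) \<le> sqrt (Nn (\<lambda>t. a t - b t)) + sqrt (Nn (\<lambda>t. b t - c t))"
proof -
  have "sqrt (Nn (\<lambda>t. (a t - b t) + (b t - c t))) \<le> sqrt (Nn (\<lambda>t. a t - b t)) + sqrt (Nn (\<lambda>t. b t - c t))"
    using Nn_add[of "\<lambda>t. a t - b t" "\<lambda>t. b t - c t"] L2_diff assms by blast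
  then show ?thesis by simp
qed

lemma ip2_expand:
  assumes "q \<in> L2" "x \<in> L2"
  shows "ip2 (\<lambda>t. q t - c *s x t) (\<lambda>t. q t - c *s x t)
    = ip2 q q - cnj c * ip2 q x - c * ip2 x q + c * cnj c * ip2 x x"
proof -
  have cx: "(\<lambda>t. c *s x t) \<in> L2" using L2_scale[OF assms(2)] .
  have d: "(\<lambda>t. q t - c *s x t) \<in> L2" using L2_diff[OF assms(1) cx] .
  have "ip2 (\<lambda>t. q t - c *s x t) (\<lambda>t. q t - c *s x t)
     = ip2 q (\<lambda>t. q t - c *s x t) - c * ip2 x (\<lambda>t. q t - c *s x t)"
    using ip2_diff_left[OF assms(1) cx d] ip2_scale_left by simp
  also have "ip2 q (\<lambda>t. q t - c *s x t) = ip2 q q - cnj c * ip2 q x"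
    using ip2_diff_right[OF assms(1) cx assms(1)] ip2_scale_right by simp
  also have "ip2 x (\<lambda>t. q t - c *s x t) = ip2 x q - cnj c * ip2 x x"
    using ip2_diff_right[OF assms(1) cx assms(2)] ip2_scale_right by simp
  finally show ?thesis by (simp add: algebra_simps)
qed

lemma orth_from_min:
  assumes q: "q \<in> L2" and x: "x \<in> L2"
    and min: "\<And>c. Nn q \<le> Nn (\<lambda>t. q t - c *s x t)"
  shows "ip2 q x = 0"
proof (rule ccontr)
  assume ne: "ip2 q x \<noteq> 0"
  define \<beta> where "\<beta> = ip2 q x"
  define B where "B = (cmod \<beta>)^2"
  have B: "B > 0" using ne by (simp add: B_def \<beta>_def)
  define s where "s = 1 / (Nn x + 1)"
  have s: "s > 0" using Nn_nonneg[of x] by (simp add: s_def add_nonneg_pos)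
  have sN: "s * Nn x < 1" using Nn_nonneg[of x] by (simp add: s_def field_simps)
  define c where "c = complex_of_real s * \<beta>"
  have bb: "cnj \<beta> * \<beta> = of_real B" "\<beta> * cnj \<beta> = of_real B"
    by (simp_all add: B_def complex_norm_square mult.commute del: of_real_power)
  have "of_real (Nn (\<lambda>t. q t - c *s x t)) = ip2 q q - cnj c * ip2 q x - c * ip2 x q + c * cnj c * ip2 x x"
    using ip2_expand[OF q x, of c] by (simp add: ip2_self)
  also have "\<dots> = of_real (Nn q) - of_real (s * B) - of_real (s * B) + of_real (s^2 * B * Nn x)"
  proof -
    have "cnj c * ip2 q x = of_real s * (cnj \<beta> * \<beta>)" by (simp add: c_def \<beta>_def)
    moreover have "c * ip2 x q = of_real s * (\<beta> * cnj \<beta>)"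
      by (simp add: c_def \<beta>_def ip2_commute[of x q])
    moreover have "c * cnj c * ip2 x x = of_real s * of_real s * (\<beta> * cnj \<beta>) * of_real (Nn x)"
      by (simp add: c_def ip2_self mult_ac)
    ultimately show ?thesis using bb by (simp add: ip2_self power2_eq_square mult_ac)
  qed
  also have "\<dots> = of_real (Nn q - 2 * s * B + s^2 * B * Nn x)" by simp
  finally have "Nn (\<lambda>t. q t - c *s x t) = Nn q - 2 * s * B + s^2 * B * Nn x"
    using of_real_eq_iff by blast
  with min[of c] have "2 * s * B \<le> s^2 * B * Nn x" by simp
  then have "2 * (s * B) \<le> (s * Nn x) * (s * B)" by (simp add: power2_eq_square mult_ac)
  moreover have "(s * Nn x) * (s * B) < 1 * (s * B)" using sN s B by (intro mult_strict_right_mono) auto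
  ultimately show False using s B by simp
qed




lemma projection:
  assumes WL: "W \<subseteq> L2" and W0: "(\<lambda>t. 0) \<in> W"
    and Wadd: "\<And>a b. a \<in> W \<Longrightarrow> b \<in> W \<Longrightarrow> (\<lambda>t. a t + b t) \<in> W"
    and Wsc: "\<And>a c. a \<in> W \<Longrightarrow> (\<lambda>t. c *s a t) \<in> W"
    and g: "g \<in> L2"
  shows "\<exists>w p. (\<forall>n. w n \<in> W) \<and> p \<in> L2 \<and> (\<lambda>n. Nn (\<lambda>t. w n t - p t)) \<longlonglongrightarrow> 0 \<and>
     (\<forall>x\<in>W. ip2 (\<lambda>t. g t - p t) x = 0)"
proof -
  define D where "D = (\<lambda>w. Nn (\<lambda>t. g t - w t)) ` W"
  define d where "d = Inf D"
  have Dne: "D \<noteq> {}" using W0 by (auto simp: D_def)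
  have bdd: "bdd_below D" unfolding D_def by (rule bdd_belowI[of _ 0]) (auto simp: Nn_nonneg)
  have dle: "d \<le> Nn (\<lambda>t. g t - x t)" if "x \<in> W" for x
    unfolding d_def by (rule cInf_lower[OF _ bdd]) (use that in \<open>auto simp: D_def\<close>)
  have "\<forall>n. \<exists>x. x \<in> W \<and> Nn (\<lambda>t. g t - x t) < d + inverse (real (Suc n))"
  proof
    fix n :: nat have "d < d + inverse (real (Suc n))" by simp
    then obtain y where "y \<in> D" "y < d + inverse (real (Suc n))" using cInf_lessD[OF Dne] unfolding d_def by blast
    then show "\<exists>x. x \<in> W \<and> Nn (\<lambda>t. g t - x t) < d + inverse (real (Suc n))" by (auto simp: D_def)
  qed
  then obtain w where w0: "\<forall>n. w n \<in> W \<and> Nn (\<lambda>t. g t - w n t) < d + inverse (real (Suc n))"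
    using choice[of "\<lambda>n x. x \<in> W \<and> Nn (\<lambda>t. g t - x t) < d + inverse (real (Suc n))"] by blast
  have w: "\<And>n. w n \<in> W" and wl: "\<And>n. Nn (\<lambda>t. g t - w n t) < d + inverse (real (Suc n))" using w0 by auto
  have wL: "\<And>n. w n \<in> L2" using w WL by auto
  have cauchy: "Nn (\<lambda>t. w m t - w n t) \<le> 2 * inverse (real (Suc m)) + 2 * inverse (real (Suc n))" for m n
  proof -
    define a where "a = (\<lambda>t. g t - w m t)"
    define b where "b = (\<lambda>t. g t - w n t)"
    define mid where "mid = (\<lambda>t. (1/2::complex) *s (w m t + w n t))"
    have aL: "a \<in> L2" "b \<in> L2" unfolding a_def b_def using L2_diff g wL by auto
    have midW: "mid \<in> W" unfolding mid_def using Wsc Wadd w by blast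
    have e1: "(\<lambda>t. a t + b t) = (\<lambda>t. (2::complex) *s (g t - mid t))"
      unfolding a_def b_def mid_def by (auto simp: vec_eq_iff algebra_simps)
    have e2: "Nn (\<lambda>t. a t - b t) = Nn (\<lambda>t. w m t - w n t)"
      unfolding a_def b_def by (subst Nn_swap) (simp add: algebra_simps)
    have "Nn (\<lambda>t. a t + b t) = 4 * Nn (\<lambda>t. g t - mid t)" unfolding e1 Nn_scale by simp
    also have "\<dots> \<ge> 4 * d" using dle[OF midW] by simp
    finally have "Nn (\<lambda>t. a t + b t) \<ge> 4 * d" .
    moreover have "Nn (\<lambda>t. a t + b t) + Nn (\<lambda>t. a t - b t) = 2 * Nn a + 2 * Nn b"
      using Nn_parallelo[OF aL] .
    moreover have "Nn a < d + inverse (real (Suc m))" "Nn b < d + inverse (real (Suc n))"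
      unfolding a_def b_def using wl by auto
    ultimately show ?thesis using e2 by linarith
  qed
  have C: "\<exists>N. \<forall>m\<ge>N. \<forall>n\<ge>N. Nn (\<lambda>t. w m t - w n t) < e" if e: "e > 0" for e
  proof -
    obtain N :: nat where N: "4 / e < real N" using reals_Archimedean2 by blast
    have "4 < e * real (Suc N)" using N e by (simp add: field_simps)
    then have N4: "4 * inverse (real (Suc N)) < e" by (simp add: field_simps)
    show ?thesis
    proof (intro exI allI impI)
      fix m n assume "m \<ge> N" "n \<ge> N"
      then have "inverse (real (Suc m)) \<le> inverse (real (Suc N))" "inverse (real (Suc n)) \<le> inverse (real (Suc N))"
        by (auto intro!: le_imp_inverse_le)
      with cauchy[of m n] N4 show "Nn (\<lambda>t. w m t - w n t) < e" by linarith
    qed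
  qed
  obtain p where pL: "p \<in> L2" and pc: "(\<lambda>n. Nn (\<lambda>t. w n t - p t)) \<longlonglongrightarrow> 0"
    using L2_complete[OF wL C] by blast
  have ps: "(\<lambda>n. sqrt (Nn (\<lambda>t. w n t - p t))) \<longlonglongrightarrow> 0"
    using tendsto_real_sqrt[OF pc] by simp
  define q where "q = (\<lambda>t. g t - p t)"
  have qL: "q \<in> L2" unfolding q_def using L2_diff g pL by auto
  have sq_le: "sqrt (Nn q) \<le> sqrt d"
  proof (rule LIMSEQ_le_const)
    show "(\<lambda>n. sqrt (d + inverse (real (Suc n))) + sqrt (Nn (\<lambda>t. w n t - p t))) \<longlonglongrightarrow> sqrt d"
      using tendsto_add[OF tendsto_real_sqrt[OF tendsto_add[OF tendsto_const LIMSEQ_inverse_real_of_nat]] ps]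
      by simp
    show "\<exists>N. \<forall>n\<ge>N. sqrt (Nn q) \<le> sqrt (d + inverse (real (Suc n))) + sqrt (Nn (\<lambda>t. w n t - p t))"
    proof (intro exI allI impI)
      fix n :: nat
      have "sqrt (Nn q) \<le> sqrt (Nn (\<lambda>t. g t - w n t)) + sqrt (Nn (\<lambda>t. w n t - p t))"
        unfolding q_def using Nn_tri[OF g wL pL] .
      also have "sqrt (Nn (\<lambda>t. g t - w n t)) \<le> sqrt (d + inverse (real (Suc n)))"
        using wl[of n] by simp
      finally show "sqrt (Nn q) \<le> sqrt (d + inverse (real (Suc n))) + sqrt (Nn (\<lambda>t. w n t - p t))" by simp
    qed
  qed
  have minq: "Nn q \<le> Nn (\<lambda>t. q t - c *s x t)" if x: "x \<in> W" for x c
  proof -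
    have xL: "x \<in> L2" using x WL by auto
    have cxL: "(\<lambda>t. c *s x t) \<in> L2" using L2_scale[OF xL] .
    have aL: "(\<lambda>t. g t - c *s x t) \<in> L2" using L2_diff[OF g cxL] .
    have "sqrt d \<le> sqrt (Nn (\<lambda>t. q t - c *s x t))"
    proof (rule LIMSEQ_le_const)
      show "(\<lambda>n. sqrt (Nn (\<lambda>t. q t - c *s x t)) + sqrt (Nn (\<lambda>t. w n t - p t))) \<longlonglongrightarrow> sqrt (Nn (\<lambda>t. q t - c *s x t))"
        using tendsto_add[OF tendsto_const ps] by simp
      show "\<exists>N. \<forall>n\<ge>N. sqrt d \<le> sqrt (Nn (\<lambda>t. q t - c *s x t)) + sqrt (Nn (\<lambda>t. w n t - p t))"
      proof (intro exI allI impI)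
        fix n :: nat
        have W1: "(\<lambda>t. w n t + c *s x t) \<in> W" using Wadd[OF w Wsc[OF x]] .
        have "d \<le> Nn (\<lambda>t. g t - (w n t + c *s x t))" using dle[OF W1] .
        also have "(\<lambda>t. g t - (w n t + c *s x t)) = (\<lambda>t. (g t - c *s x t) - w n t)"
          by (auto simp: algebra_simps)
        finally have "sqrt d \<le> sqrt (Nn (\<lambda>t. (g t - c *s x t) - w n t))" by simp
        also have "\<dots> \<le> sqrt (Nn (\<lambda>t. (g t - c *s x t) - p t)) + sqrt (Nn (\<lambda>t. p t - w n t))"
          using Nn_tri[OF aL pL wL] .
        also have "(\<lambda>t. (g t - c *s x t) - p t) = (\<lambda>t. q t - c *s x t)"
          unfolding q_def by (auto simp: algebra_simps)
        also have "Nn (\<lambda>t. p t - w n t) = Nn (\<lambda>t. w n t - p t)" by (rule Nn_swap)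
        finally show "sqrt d \<le> sqrt (Nn (\<lambda>t. q t - c *s x t)) + sqrt (Nn (\<lambda>t. w n t - p t))" .
      qed
    qed
    with sq_le have "sqrt (Nn q) \<le> sqrt (Nn (\<lambda>t. q t - c *s x t))" by linarith
    then show ?thesis by simp
  qed
  have orth: "\<forall>x\<in>W. ip2 q x = 0"
  proof
    fix x assume x: "x \<in> W"
    show "ip2 q x = 0" by (rule orth_from_min[OF qL _ minq[OF x]]) (use x WL in auto)
  qed
  show ?thesis using w pL pc orth unfolding q_def by blast
qed




lemma meas_contCM: "continuous_on UNIV f \<Longrightarrow> f \<in> borel_measurable CM"
  unfolding CM_def by (intro measurable_restrict_space1) (simp add: borel_measurable_continuous_onI)

lemma meas_expCM[measurable]: "(\<lambda>t. exp (c * complex_of_real t)) \<in> borel_measurable CM"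
  by (intro meas_contCM continuous_intros)

lemma meas_vec:
  fixes F :: "'a \<Rightarrow> complex^'n"
  assumes "\<And>i. (\<lambda>x. F x $ i) \<in> borel_measurable M"
  shows "F \<in> borel_measurable M"
  unfolding borel_measurable_euclidean_space[where f=F]
proof
  fix b :: "complex^'n" assume "b \<in> Basis"
  then obtain i u where b: "b = axis i u" "u \<in> Basis" unfolding Basis_vec_def by auto
  have [measurable]: "(\<lambda>x. F x $ i) \<in> borel_measurable M" by (rule assms)
  have "(\<lambda>x. inner (F x $ i) u) \<in> borel_measurable M" by measurable
  then show "(\<lambda>x. inner (F x) b) \<in> borel_measurable M" by (simp add: b inner_axis)
qed

lemma norm_le_sum_vec: "norm (x::complex^'n) \<le> (\<Sum>i\<in>UNIV. norm (x $ i))"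
  unfolding norm_vec_def by (rule L2_set_le_sum) auto

definition Ek :: "int \<Rightarrow> 'n::finite \<Rightarrow> real \<Rightarrow> complex^'n" where
  "Ek k j = (\<lambda>t. exp (\<i> * of_int k * of_real t) *s axis j 1)"

lemma cinner_Ek: "cinner x (Ek k j t) = x $ j * exp (- \<i> * of_int k * of_real t)"
proof -
  have "cinner x (Ek k j t) = (\<Sum>l\<in>UNIV. if l = j then x $ l * cnj (exp (\<i> * of_int k * of_real t)) else 0)"
    unfolding cinner_def Ek_def by (intro sum.cong) (auto simp: axis_def)
  also have "\<dots> = x $ j * cnj (exp (\<i> * of_int k * of_real t))" by simp
  also have "cnj (exp (\<i> * of_int k * of_real t)) = exp (- \<i> * of_int k * of_real t)"
    by (simp add: exp_cnj)
  finally show ?thesis .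
qed

lemma vfcoeff_ip2: "vfcoeff h k $ j = ip2 h (Ek k j)"
  unfolding vfcoeff_def fcoeff_def ip2_CM by (simp add: LINT_CM cinner_Ek)

lemma Ek_L2: "Ek k j \<in> L2"
  unfolding Ek_def
proof (rule L2_mult[OF L2_const, where B=1])
  show "(\<lambda>t. exp (\<i> * of_int k * complex_of_real t)) \<in> borel_measurable CM"
    by (intro meas_contCM continuous_intros)
qed simp

lemma H2_iff: "h \<in> Hp 2 \<longleftrightarrow> h \<in> L2 \<and> (\<forall>k<0. \<forall>j. ip2 h (Ek k j) = 0)"
  unfolding Hp_def L2_def by (auto simp: vec_eq_iff vfcoeff_ip2)

lemma H2_L2: "h \<in> Hp 2 \<Longrightarrow> h \<in> L2" by (simp add: H2_iff)

lemma H2_add: "g \<in> Hp 2 \<Longrightarrow> h \<in> Hp 2 \<Longrightarrow> (\<lambda>t. g t + h t) \<in> Hp 2"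
  by (simp add: H2_iff L2_add ip2_add_left Ek_L2)

lemma H2_diff: "g \<in> Hp 2 \<Longrightarrow> h \<in> Hp 2 \<Longrightarrow> (\<lambda>t. g t - h t) \<in> Hp 2"
  by (simp add: H2_iff L2_diff ip2_diff_left Ek_L2)

lemma H2_scale: "g \<in> Hp 2 \<Longrightarrow> (\<lambda>t. c *s g t) \<in> Hp 2"
  by (simp add: H2_iff L2_scale ip2_scale_left)

lemma H2_zero: "(\<lambda>t. 0) \<in> Hp 2"
  using H2_scale[of "\<lambda>t. 0" 0] by (simp add: H2_iff L2_zero ip2_CM cinner_def)

lemma H2_sum: "finite I \<Longrightarrow> (\<And>i. i \<in> I \<Longrightarrow> F i \<in> Hp 2) \<Longrightarrow> (\<lambda>t. \<Sum>i\<in>I. F i t) \<in> Hp 2"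
proof (induction I rule: finite_induct)
  case empty then show ?case using H2_zero by simp
next
  case (insert x J)
  then show ?case using H2_add[of "F x" "\<lambda>t. \<Sum>i\<in>J. F i t"] by simp
qed

lemma ip2_approx_zero:
  assumes g: "g \<in> L2" and y: "y \<in> L2"
    and ap: "\<And>e. e > 0 \<Longrightarrow> \<exists>w. w \<in> L2 \<and> sqrt (Nn (\<lambda>t. g t - w t)) < e \<and> ip2 w y = 0"
  shows "ip2 g y = 0"
proof (rule ccontr)
  assume ne: "ip2 g y \<noteq> 0"
  define a where "a = norm (ip2 g y)"
  define K where "K = sqrt (Nn y)"
  have a: "a > 0" using ne by (simp add: a_def)
  have K: "K \<ge> 0" by (simp add: K_def Nn_nonneg)
  have "a / (K + 1) > 0" using a K by simp
  from ap[OF this] obtain w where w: "w \<in> L2" "sqrt (Nn (\<lambda>t. g t - w t)) < a / (K + 1)" "ip2 w y = 0" by blast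
  have "ip2 g y = ip2 (\<lambda>t. g t - w t) y" using ip2_diff_left[OF g w(1) y] w(3) by simp
  then have "a \<le> sqrt (Nn (\<lambda>t. g t - w t)) * K"
    unfolding a_def K_def using ip2_CS[OF L2_diff[OF g w(1)] y] by simp
  also have "\<dots> \<le> a / (K + 1) * K" using w(2) K by (intro mult_right_mono) auto
  also have "\<dots> < a" using a K by (simp add: field_simps)
  finally show False by simp
qed

lemma seq_approx:
  assumes "(\<lambda>n. Nn (\<lambda>t. w n t - p t)) \<longlonglongrightarrow> 0" "e > 0"
  shows "\<exists>n. sqrt (Nn (\<lambda>t. p t - w n t)) < e"
proof -
  have "(\<lambda>n. sqrt (Nn (\<lambda>t. w n t - p t))) \<longlonglongrightarrow> 0" using tendsto_real_sqrt[OF assms(1)] by simp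
  from LIMSEQ_D[OF this assms(2)] obtain n where "norm (sqrt (Nn (\<lambda>t. w n t - p t)) - 0) < e" by blast
  then have "sqrt (Nn (\<lambda>t. p t - w n t)) < e" using Nn_swap[of p "w n"] Nn_nonneg[of "\<lambda>t. w n t - p t"] by simp
  then show ?thesis by blast
qed

definition shift :: "(real \<Rightarrow> complex^'n) \<Rightarrow> (real \<Rightarrow> complex^'n)" where
  "shift h = (\<lambda>t. exp (\<i> * of_real t) *s h t)"

lemma ip2_mulexp:
  "ip2 (\<lambda>t. exp (\<i> * of_int m * of_real t) *s u t) (Ek k j) = ip2 u (Ek (k - m) j)"
proof -
  have "cinner (exp (\<i> * of_int m * of_real t) *s u t) (Ek k j t) = cinner (u t) (Ek (k - m) j t)" for t
  proof -
    have "exp (\<i> * of_int m * of_real t) * exp (- \<i> * of_int k * of_real t) = exp (- \<i> * of_int (k - m) * of_real t)"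
      by (simp add: exp_add[symmetric] algebra_simps)
    then show ?thesis unfolding cinner_scale_left cinner_Ek by (simp add: mult_ac)
  qed
  then show ?thesis by (simp add: ip2_CM)
qed

lemma L2_mulexp: "u \<in> L2 \<Longrightarrow> (\<lambda>t. exp (\<i> * of_int m * of_real t) *s u t) \<in> L2"
  by (rule L2_mult[where B=1]) (auto intro!: meas_contCM continuous_intros)

lemma shift_alt: "shift h = (\<lambda>t. exp (\<i> * of_int 1 * of_real t) *s h t)"
  unfolding shift_def by simp

lemma shift_L2: "h \<in> L2 \<Longrightarrow> shift h \<in> L2"
  unfolding shift_alt by (rule L2_mulexp)

lemma ip2_shift_Ek: "ip2 (shift h) (Ek k j) = ip2 h (Ek (k - 1) j)"
  unfolding shift_alt by (rule ip2_mulexp)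

lemma ip2_mulexp_m1: "ip2 (\<lambda>t. exp (\<i> * of_int (-1) * of_real t) *s u t) (Ek k j) = ip2 u (Ek (k + 1) j)"
  using ip2_mulexp[of "-1" u k j] by simp

lemma shift_H2: "h \<in> Hp 2 \<Longrightarrow> shift h \<in> Hp 2"
  unfolding H2_iff by (simp add: ip2_shift_Ek shift_L2)

lemma Sstar_alt: "Sstar v = (\<lambda>t. exp (\<i> * of_int (-1) * of_real t) *s v t - exp (\<i> * of_int (-1) * of_real t) *s vfcoeff v 0)"
  unfolding Sstar_def by (simp add: vector_ssub_ldistrib)

lemma Sstar_L2: "v \<in> L2 \<Longrightarrow> Sstar v \<in> L2"
  unfolding Sstar_alt by (intro L2_diff L2_mulexp L2_const)

lemma ip2_const_Ek: "ip2 (\<lambda>t. c) (Ek m j) = (if m = 0 then c $ j else 0)"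
proof -
  have "ip2 (\<lambda>t. c) (Ek m j) = (1/(2*pi)) * (c $ j * integral\<^sup>L CM (\<lambda>t. exp (- \<i> * of_int m * of_real t)))"
    by (simp add: ip2_CM cinner_Ek)
  moreover have "integral\<^sup>L CM (\<lambda>t. exp (- \<i> * of_int m * of_real t)) = (if m = 0 then 2*pi else 0)"
    using int_exp_CM[of "-m"] by simp
  ultimately show ?thesis by simp
qed

lemma Sstar_coeff:
  assumes "v \<in> L2"
  shows "ip2 (Sstar v) (Ek k j) = ip2 v (Ek (k + 1) j) - (if k + 1 = 0 then vfcoeff v 0 $ j else 0)"
proof -
  have "ip2 (Sstar v) (Ek k j) = ip2 (\<lambda>t. exp (\<i> * of_int (-1) * of_real t) *s v t) (Ek k j)
      - ip2 (\<lambda>t. exp (\<i> * of_int (-1) * of_real t) *s vfcoeff v 0) (Ek k j)"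
    unfolding Sstar_alt using assms by (intro ip2_diff_left L2_mulexp L2_const Ek_L2)
  also have "\<dots> = ip2 v (Ek (k + 1) j) - ip2 (\<lambda>t. vfcoeff v 0) (Ek (k + 1) j)"
    unfolding ip2_mulexp_m1 ..
  finally show ?thesis by (simp add: ip2_const_Ek)
qed

lemma Sstar_H2: "v \<in> Hp 2 \<Longrightarrow> Sstar v \<in> Hp 2"
proof -
  assume v: "v \<in> Hp 2"
  then have vL: "v \<in> L2" by (rule H2_L2)
  show "Sstar v \<in> Hp 2" unfolding H2_iff
  proof (intro conjI allI impI)
    show "Sstar v \<in> L2" using Sstar_L2[OF vL] .
    fix k :: int and j assume k: "k < 0"
    show "ip2 (Sstar v) (Ek k j) = 0"
    proof (cases "k + 1 = 0")
      case True then show ?thesis by (simp add: Sstar_coeff[OF vL] vfcoeff_ip2)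
    next
      case False
      then have "k + 1 < 0" using k by simp
      then show ?thesis using v False by (simp add: Sstar_coeff[OF vL] H2_iff)
    qed
  qed
qed

lemma ip2_const_right:
  assumes "u \<in> L2"
  shows "ip2 u (\<lambda>t. c) = (\<Sum>j\<in>UNIV. cnj (c $ j) * ip2 u (Ek 0 j))"
proof -
  have "cinner (u t) c = (\<Sum>j\<in>UNIV. cnj (c $ j) * cinner (u t) (Ek 0 j t))" for t
    unfolding cinner_Ek by (simp add: cinner_def mult_ac)
  then have "ip2 u (\<lambda>t. c) = (1/(2*pi)) * integral\<^sup>L CM (\<lambda>t. \<Sum>j\<in>UNIV. cnj (c $ j) * cinner (u t) (Ek 0 j t))"
    by (simp add: ip2_CM)
  also have "\<dots> = (1/(2*pi)) * (\<Sum>j\<in>UNIV. cnj (c $ j) * integral\<^sup>L CM (\<lambda>t. cinner (u t) (Ek 0 j t)))"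
    using assms by (simp add: Bochner_Integration.integral_sum L2_cinner_integrable Ek_L2)
  also have "\<dots> = (\<Sum>j\<in>UNIV. cnj (c $ j) * ip2 u (Ek 0 j))"
    by (simp add: ip2_CM sum_distrib_left mult_ac)
  finally show ?thesis .
qed

lemma ip2_Sstar_adj:
  assumes h: "h \<in> Hp 2" and v: "v \<in> L2"
  shows "ip2 h (Sstar v) = ip2 (shift h) v"
proof -
  have hL: "h \<in> L2" using h by (rule H2_L2)
  have gen: "ip2 h (\<lambda>t. exp (\<i> * of_int (-1) * of_real t) *s w t) = ip2 (shift h) w" for w
  proof -
    have "cinner (h t) (exp (\<i> * of_int (-1) * of_real t) *s w t) = cinner (exp (\<i> * of_real t) *s h t) (w t)" for t
      by (simp add: cinner_scale_left cinner_scale_right exp_cnj)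
    then show ?thesis by (simp add: ip2_CM shift_def)
  qed
  have "ip2 h (Sstar v) = ip2 h (\<lambda>t. exp (\<i> * of_int (-1) * of_real t) *s v t)
       - ip2 h (\<lambda>t. exp (\<i> * of_int (-1) * of_real t) *s vfcoeff v 0)"
    unfolding Sstar_alt using hL v by (intro ip2_diff_right L2_mulexp L2_const)
  also have "\<dots> = ip2 (shift h) v - ip2 (shift h) (\<lambda>t. vfcoeff v 0)" by (simp only: gen)
  also have "ip2 (shift h) (\<lambda>t. vfcoeff v 0) = 0"
  proof -
    have "ip2 (shift h) (Ek 0 j) = 0" for j
      using h unfolding ip2_shift_Ek by (simp add: H2_iff)
    then show ?thesis by (simp add: ip2_const_right[OF shift_L2[OF hL]])
  qed
  finally show ?thesis by simp
qed




lemma Sstar_pow_H2: "u \<in> Hp 2 \<Longrightarrow> (Sstar ^^ m) u \<in> Hp 2"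
  by (induction m) (simp_all add: Sstar_H2)

lemma ip2_Sstar_pow:
  assumes "h \<in> Hp 2" "u \<in> Hp 2"
  shows "ip2 h ((Sstar ^^ m) u) = ip2 ((shift ^^ m) h) u"
  using assms(1)
proof (induction m arbitrary: h)
  case 0 then show ?case by simp
next
  case (Suc m)
  have "ip2 h ((Sstar ^^ Suc m) u) = ip2 h (Sstar ((Sstar ^^ m) u))" by simp
  also have "\<dots> = ip2 (shift h) ((Sstar ^^ m) u)"
    using ip2_Sstar_adj[OF Suc.prems H2_L2[OF Sstar_pow_H2[OF assms(2)]]] .
  also have "\<dots> = ip2 ((shift ^^ m) (shift h)) u" using Suc.IH[OF shift_H2[OF Suc.prems]] .
  also have "(shift ^^ m) (shift h) = (shift ^^ Suc m) h" by (simp only: funpow_Suc_right comp_def)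
  finally show ?case .
qed

lemma shift_pow: "(shift ^^ m) h = (\<lambda>t. exp (\<i> * of_nat m * of_real t) *s h t)"
proof (induction m)
  case 0 then show ?case by simp
next
  case (Suc m)
  have "exp (\<i> * of_real t) * exp (\<i> * of_nat m * of_real t) = exp (\<i> * of_nat (Suc m) * of_real t)" for t
    by (simp add: exp_add[symmetric] algebra_simps)
  then show ?case using Suc by (simp add: shift_def vector_smult_assoc)
qed

lemma Phi_comp: "(zbarFstar f t *v h t) $ i = exp (- \<i> * of_real t) * cinner (h t) (f i t)"
  unfolding matrix_vector_mult_def zbarFstar_def Fmat_def cinner_def
  by (simp add: sum_distrib_left mult_ac)

lemma ker_iff:
  assumes f: "\<And>i. f i \<in> Hp 2" and h: "h \<in> Hp 2"
  shows "h \<in> kerHankel (zbarFstar f) \<longleftrightarrow> (\<forall>i m. ip2 h ((Sstar ^^ m) (f i)) = 0)"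
proof -
  have hL: "h \<in> L2" using h by (rule H2_L2)
  have fL: "\<And>i. f i \<in> L2" using f H2_L2 by auto
  define G where "G i t = cinner (h t) (f i t)" for i t
  have GI: "integrable CM (G i)" for i unfolding G_def using L2_cinner_integrable[OF hL fL] .
  have Gm[measurable]: "G i \<in> borel_measurable CM" for i using GI by auto
  define P where "P = (\<lambda>t. zbarFstar f t *v h t)"
  have comp: "P t $ i = exp (- \<i> * of_real t) * G i t" for t i unfolding P_def G_def by (rule Phi_comp)
  have Pm: "P \<in> borel_measurable CM"
  proof (rule meas_vec)
    fix i show "(\<lambda>x. P x $ i) \<in> borel_measurable CM" unfolding comp by measurable
  qed
  have Lp1: "Lp_circ 1 P"
    unfolding Lp_CM
  proof (intro conjI Pm)
    show "integrable CM (\<lambda>t. norm (P t) ^ 1)"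
    proof (rule Bochner_Integration.integrable_bound[of CM "\<lambda>t. \<Sum>i\<in>UNIV. norm (G i t)"])
      show "integrable CM (\<lambda>t. \<Sum>i\<in>UNIV. norm (G i t))" using GI by auto
      show "(\<lambda>t. norm (P t) ^ 1) \<in> borel_measurable CM" using Pm by measurable
      show "AE t in CM. norm (norm (P t) ^ 1) \<le> norm (\<Sum>i\<in>UNIV. norm (G i t))"
      proof (intro AE_I2)
        fix t
        have "norm (P t) \<le> (\<Sum>i\<in>UNIV. norm (P t $ i))" by (rule norm_le_sum_vec)
        also have "\<dots> = (\<Sum>i\<in>UNIV. norm (G i t))" by (simp add: comp norm_mult)
        finally show "norm (norm (P t) ^ 1) \<le> norm (\<Sum>i\<in>UNIV. norm (G i t))"
          by (simp add: sum_nonneg)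
      qed
    qed
  qed
  have coef: "vfcoeff P k $ i = fcoeff (G i) (k + 1)" for k i
  proof -
    have "P t $ i * exp (- \<i> * of_int k * of_real t) = G i t * exp (- \<i> * of_int (k + 1) * of_real t)" for t
      unfolding comp by (simp add: exp_add[symmetric] algebra_simps)
    then show ?thesis unfolding vfcoeff_def fcoeff_def by simp
  qed
  have link: "ip2 h ((Sstar ^^ m) (f i)) = fcoeff (G i) (- int m)" for m i
  proof -
    have "ip2 h ((Sstar ^^ m) (f i)) = ip2 ((shift ^^ m) h) (f i)" by (rule ip2_Sstar_pow[OF h f])
    also have "\<dots> = fcoeff (G i) (- int m)"
      unfolding shift_pow ip2_CM fcoeff_def LINT_CM G_def
      by (simp add: cinner_scale_left mult_ac)
    finally show ?thesis .
  qed
  have "h \<in> kerHankel (zbarFstar f) \<longleftrightarrow> P \<in> Hp 1"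
    using h unfolding kerHankel_def P_def by simp
  also have "\<dots> \<longleftrightarrow> (\<forall>k<0. \<forall>i. fcoeff (G i) (k + 1) = 0)"
    using Lp1 unfolding Hp_def by (auto simp: vec_eq_iff coef)
  also have "\<dots> \<longleftrightarrow> (\<forall>i m. fcoeff (G i) (- int m) = 0)"
  proof
    assume A: "\<forall>k<0. \<forall>i. fcoeff (G i) (k + 1) = 0"
    show "\<forall>i m. fcoeff (G i) (- int m) = 0"
    proof (intro allI)
      fix i m
      have "- int m - 1 < 0" by simp
      then have "fcoeff (G i) (- int m - 1 + 1) = 0" using A by blast
      then show "fcoeff (G i) (- int m) = 0" by simp
    qed
  next
    assume B: "\<forall>i m. fcoeff (G i) (- int m) = 0"
    show "\<forall>k<0. \<forall>i. fcoeff (G i) (k + 1) = 0"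
    proof (intro allI impI)
      fix k :: int and i assume "k < 0"
      then have "k + 1 = - int (nat (- (k + 1)))" by simp
      then show "fcoeff (G i) (k + 1) = 0" using B by metis
    qed
  qed
  also have "\<dots> \<longleftrightarrow> (\<forall>i m. ip2 h ((Sstar ^^ m) (f i)) = 0)" by (simp add: link)
  finally show ?thesis .
qed




lemma sum_ext_if: "(N1::nat) \<le> N \<Longrightarrow> (\<Sum>k<N. if k < N1 then a k else 0) = (\<Sum>k<N1. a k)"
proof -
  assume "N1 \<le> N"
  then have "{..<N} \<inter> {k. k < N1} = {..<N1}" by (auto intro: less_le_trans)
  then show ?thesis by (simp add: sum.If_cases)
qed

lemma set_eq_ex:
  "{g \<in> A. \<forall>e>(0::real). \<exists>N c. P g (F N c) e} = {g \<in> A. \<forall>e>0. \<exists>w\<in>{w. \<exists>N c. w = F N c}. P g w e}"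
  by blast

theorem mainTheorem14:
  fixes f :: "'s::finite \<Rightarrow> real \<Rightarrow> complex^'n"
  assumes "\<forall>i. f i \<in> Hp 2"
  shows "Estar f = H2_ominus (kerHankel (zbarFstar f))"
proof -
  have fH: "\<And>i. f i \<in> Hp 2" using assms by auto
  define X where "X i k = (Sstar ^^ k) (f i)" for i k
  have XH: "X i k \<in> Hp 2" for i k unfolding X_def by (rule Sstar_pow_H2[OF fH])
  have XL: "X i k \<in> L2" for i k using XH H2_L2 by auto
  define W where "W = {w. \<exists>N (c::'s \<Rightarrow> nat \<Rightarrow> complex). w = (\<lambda>t. \<Sum>i\<in>UNIV. \<Sum>k<N. c i k *s X i k t)}"
  have Est: "Estar f = {g \<in> Hp 2. \<forall>e>0. \<exists>w\<in>W. sqrt (Nn (\<lambda>t. g t - w t)) < e}"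
    unfolding Estar_def W_def X_def dist2_CM by (rule set_eq_ex)
  have WH: "w \<in> Hp 2" if "w \<in> W" for w
  proof -
    from that obtain N c where w: "w = (\<lambda>t. \<Sum>i\<in>UNIV. \<Sum>k<N. c i k *s X i k t)" unfolding W_def by blast
    show ?thesis unfolding w by (intro H2_sum H2_scale XH) auto
  qed
  have WL: "W \<subseteq> L2" using WH H2_L2 by auto
  have W0: "(\<lambda>t. 0) \<in> W" unfolding W_def by (rule CollectI, rule exI[of _ 0]) simp
  have Wadd: "(\<lambda>t. a t + b t) \<in> W" if "a \<in> W" "b \<in> W" for a b
  proof -
    from that obtain N1 c1 N2 c2 where a: "a = (\<lambda>t. \<Sum>i\<in>UNIV. \<Sum>k<N1. c1 i k *s X i k t)"
      and b: "b = (\<lambda>t. \<Sum>i\<in>UNIV. \<Sum>k<N2. c2 i k *s X i k t)" unfolding W_def by blast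
    define c where "c i k = (if k < N1 then c1 i k else 0) + (if k < N2 then c2 i k else 0)" for i k
    have "(\<lambda>t. a t + b t) = (\<lambda>t. \<Sum>i\<in>UNIV. \<Sum>k<N1 + N2. c i k *s X i k t)"
    proof
      fix t
      have "(\<Sum>k<N1 + N2. c i k *s X i k t) = (\<Sum>k<N1. c1 i k *s X i k t) + (\<Sum>k<N2. c2 i k *s X i k t)" for i
      proof -
        have "(\<Sum>k<N1 + N2. c i k *s X i k t) = (\<Sum>k<N1 + N2. (if k < N1 then c1 i k *s X i k t else 0))
              + (\<Sum>k<N1 + N2. (if k < N2 then c2 i k *s X i k t else 0))"
        proof -
          have pt: "c i k *s X i k t = (if k < N1 then c1 i k *s X i k t else 0) + (if k < N2 then c2 i k *s X i k t else 0)" for k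
            unfolding c_def vector_sadd_rdistrib by simp
          show ?thesis unfolding pt by (rule sum.distrib)
        qed
        also have "\<dots> = (\<Sum>k<N1. c1 i k *s X i k t) + (\<Sum>k<N2. c2 i k *s X i k t)"
          by (simp add: sum_ext_if)
        finally show ?thesis .
      qed
      then show "a t + b t = (\<Sum>i\<in>UNIV. \<Sum>k<N1 + N2. c i k *s X i k t)"
        unfolding a b by (simp add: sum.distrib)
    qed
    then show ?thesis unfolding W_def by blast
  qed
  have Wsc: "(\<lambda>t. z *s a t) \<in> W" if "a \<in> W" for a z
  proof -
    from that obtain N c where a: "a = (\<lambda>t. \<Sum>i\<in>UNIV. \<Sum>k<N. c i k *s X i k t)" unfolding W_def by blast
    have eq: "(\<lambda>t. z *s a t) = (\<lambda>t. \<Sum>i\<in>UNIV. \<Sum>k<N. (z * c i k) *s X i k t)"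
      unfolding a by (auto simp: vec_eq_iff sum_distrib_left mult.assoc)
    have "\<exists>N' c'. (\<lambda>t. z *s a t) = (\<lambda>t. \<Sum>i\<in>UNIV. \<Sum>k<N'. c' i k *s X i k t)"
      by (rule exI[of _ N], rule exI[of _ "\<lambda>i k. z * c i k"]) (simp only: eq)
    then show ?thesis unfolding W_def mem_Collect_eq .
  qed
  have XW: "X i m \<in> W" for i m
  proof -
    define c where "c i' k = (if i' = i then (if k = m then 1 else 0) else (0::complex))" for i' k
    have inner: "(\<Sum>k<Suc m. c i' k *s X i' k t) = (if i' = i then X i' m t else 0)" for i' t
    proof (cases "i' = i")
      case True
      have "(\<Sum>k<Suc m. c i' k *s X i' k t) = (\<Sum>k<Suc m. if k = m then X i' k t else 0)"
        unfolding c_def using True by (intro sum.cong) auto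
      also have "\<dots> = X i' m t" by simp
      finally show ?thesis using True by simp
    next
      case False then show ?thesis by (simp add: c_def)
    qed
    have "X i m = (\<lambda>t. \<Sum>i'\<in>UNIV. \<Sum>k<Suc m. c i' k *s X i' k t)"
      unfolding inner by simp
    then show ?thesis unfolding W_def by blast
  qed
  have ker: "h \<in> kerHankel (zbarFstar f) \<longleftrightarrow> (\<forall>i m. ip2 h (X i m) = 0)" if "h \<in> Hp 2" for h
    unfolding X_def by (rule ker_iff[OF fH that])
  have kerH: "h \<in> Hp 2" if "h \<in> kerHankel (zbarFstar f)" for h
    using that unfolding kerHankel_def by simp
  have orthW: "ip2 w h = 0" if h: "h \<in> kerHankel (zbarFstar f)" and w: "w \<in> W" for h w
  proof -
    have hH: "h \<in> Hp 2" using kerH[OF h] .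
    have hL: "h \<in> L2" using H2_L2[OF hH] .
    from w obtain N c where wd: "w = (\<lambda>t. \<Sum>i\<in>UNIV. \<Sum>k<N. c i k *s X i k t)" unfolding W_def by blast
    have z: "ip2 (X i k) h = 0" for i k
      using ker[OF hH] h ip2_commute[of "X i k" h] by simp
    have "ip2 (\<lambda>t. \<Sum>k<N. c i k *s X i k t) h = 0" for i
      using ip2_sum_left[of "{..<N}" "\<lambda>k t. c i k *s X i k t" h] hL XL
      by (simp add: L2_scale ip2_scale_left z)
    then show ?thesis unfolding wd
      using ip2_sum_left[of UNIV "\<lambda>i t. \<Sum>k<N. c i k *s X i k t" h] hL XL
      by (simp add: L2_sum L2_scale)
  qed
  show ?thesis
  proof (rule set_eqI, rule iffI)
    fix g assume "g \<in> Estar f"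
    then have gH: "g \<in> Hp 2" and ap: "\<And>e. e > 0 \<Longrightarrow> \<exists>w\<in>W. sqrt (Nn (\<lambda>t. g t - w t)) < e"
      unfolding Est by auto
    have gL: "g \<in> L2" using H2_L2[OF gH] .
    have "ip2 g h = 0" if h: "h \<in> kerHankel (zbarFstar f)" for h
    proof (rule ip2_approx_zero[OF gL])
      show "h \<in> L2" using H2_L2[OF kerH[OF h]] .
      fix e :: real assume "e > 0"
      from ap[OF this] obtain w where "w \<in> W" "sqrt (Nn (\<lambda>t. g t - w t)) < e" by blast
      then show "\<exists>w. w \<in> L2 \<and> sqrt (Nn (\<lambda>t. g t - w t)) < e \<and> ip2 w h = 0"
        using WL orthW[OF h] by blast
    qed
    then show "g \<in> H2_ominus (kerHankel (zbarFstar f))" unfolding H2_ominus_def using gH by blast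
  next
    fix g assume "g \<in> H2_ominus (kerHankel (zbarFstar f))"
    then have gH: "g \<in> Hp 2" and gperp: "\<And>h. h \<in> kerHankel (zbarFstar f) \<Longrightarrow> ip2 g h = 0"
      unfolding H2_ominus_def by auto
    have gL: "g \<in> L2" using H2_L2[OF gH] .
    obtain w p where w: "\<And>n. w n \<in> W" and pL: "p \<in> L2" and pc: "(\<lambda>n. Nn (\<lambda>t. w n t - p t)) \<longlonglongrightarrow> 0"
      and orth: "\<And>x. x \<in> W \<Longrightarrow> ip2 (\<lambda>t. g t - p t) x = 0"
      using projection[OF WL W0 Wadd Wsc gL] by blast
    have wL: "\<And>n. w n \<in> L2" using w WL by auto
    have approx: "\<exists>v. v \<in> L2 \<and> sqrt (Nn (\<lambda>t. p t - v t)) < e \<and> ip2 v y = 0"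
      if e: "e > 0" and y0: "\<And>n. ip2 (w n) y = 0" for e y
    proof -
      from seq_approx[OF pc e] obtain n where "sqrt (Nn (\<lambda>t. p t - w n t)) < e" by blast
      then show ?thesis using wL y0 by blast
    qed
    have pH: "p \<in> Hp 2" unfolding H2_iff
    proof (intro conjI allI impI pL)
      fix k :: int and j assume k: "k < 0"
      show "ip2 p (Ek k j) = 0"
      proof (rule ip2_approx_zero[OF pL Ek_L2])
        fix e :: real assume "e > 0"
        moreover have "ip2 (w n) (Ek k j) = 0" for n using WH[OF w[of n]] k by (simp add: H2_iff)
        ultimately show "\<exists>v. v \<in> L2 \<and> sqrt (Nn (\<lambda>t. p t - v t)) < e \<and> ip2 v (Ek k j) = 0"
          by (rule approx)
      qed
    qed
    define q where "q = (\<lambda>t. g t - p t)"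
    have qH: "q \<in> Hp 2" unfolding q_def using H2_diff[OF gH pH] .
    have qL: "q \<in> L2" using H2_L2[OF qH] .
    have qker: "q \<in> kerHankel (zbarFstar f)"
      using ker[OF qH] orth[OF XW] unfolding q_def by simp
    have gq: "ip2 g q = 0" using gperp[OF qker] .
    have pq: "ip2 p q = 0"
    proof (rule ip2_approx_zero[OF pL qL])
      fix e :: real assume "e > 0"
      moreover have "ip2 (w n) q = 0" for n
        using orth[OF w[of n]] ip2_commute[of "w n" q] unfolding q_def by simp
      ultimately show "\<exists>v. v \<in> L2 \<and> sqrt (Nn (\<lambda>t. p t - v t)) < e \<and> ip2 v q = 0"
        by (rule approx)
    qed
    have "of_real (Nn q) = ip2 q q" by (simp add: ip2_self)
    also have "\<dots> = ip2 g q - ip2 p q" unfolding q_def by (rule ip2_diff_left[OF gL pL qL[unfolded q_def]])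
    also have "\<dots> = 0" using gq pq by simp
    finally have Nq: "Nn q = 0" by simp
    have "\<forall>e>0. \<exists>v\<in>W. sqrt (Nn (\<lambda>t. g t - v t)) < e"
    proof (intro allI impI)
      fix e :: real assume e: "e > 0"
      from seq_approx[OF pc e] obtain n where n: "sqrt (Nn (\<lambda>t. p t - w n t)) < e" by blast
      have "sqrt (Nn (\<lambda>t. g t - w n t)) \<le> sqrt (Nn (\<lambda>t. g t - p t)) + sqrt (Nn (\<lambda>t. p t - w n t))"
        using Nn_tri[OF gL pL wL] .
      also have "\<dots> < e" using Nq n unfolding q_def by simp
      finally show "\<exists>v\<in>W. sqrt (Nn (\<lambda>t. g t - v t)) < e" using w by blast
    qed
    then show "g \<in> Estar f" unfolding Est using gH by blast
  qed
qed


end
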